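(* With $B_n,P_n$ as in the context, let $L_n=|B_n|$, $c_n$ the number of $1$'s in $B_n$, $m_n=|P_n|$ and $o_n$ the number of $1$'s in $P_n$. Assume that the limit $d=\lim_{n\to\infty}c_n/L_n$ exists and $d\neq 1/2$. Then the limit $\delta=\lim_{n\to\infty}o_n/m_n$ exists and $\delta=d$.
   Context: Generation operator: for a finite vector $R=\langle r_1,\dots,r_m\rangle$ of positive integers and $s\in\{1,3\}$, $\mathcal{G}(R,s)= s^{r_1}\,(4-s)^{r_2}\,s^{r_3}\cdots$ (the $i$-th run consists of $r_i$ copies of $s$ if $i$ is odd and of $4-s$ if $i$ is even), of length $\sum_i r_i$. For a finite word $W$ over $\{1,3\}$, $R(W)$ denotes $W$ itself regarded as a vector of positive integers. Define $B_1=\mathcal{G}(\langle 1,3,3,3,1\rangle,1)=1\,3\,3\,3\,1\,1\,1\,3\,3\,3\,1$, $P_1=3$, and for $n\ge1$: $B_{n+1}=B_n\,P_n\,B_n$ (concatenation), $P_{n+1}=\mathcal{G}(R(P_n),3)$. *)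

theory Defs
  imports Complex_Main
begin

fun gen :: "nat list \<Rightarrow> nat \<Rightarrow> nat list" where
  "gen [] s = []"
| "gen (r # rs) s = replicate r s @ gen rs (4 - s)"

text \<open>P n for n >= 1 (value at index 0 is an irrelevant placeholder).\<close>
fun P :: "nat \<Rightarrow> nat list" where
  "P 0 = []"
| "P (Suc 0) = [3]"
| "P (Suc (Suc n)) = gen (P (Suc n)) 3"

text \<open>B n for n >= 1 (value at index 0 is an irrelevant placeholder).\<close>
fun B :: "nat \<Rightarrow> nat list" where
  "B 0 = []"
| "B (Suc 0) = gen [1,3,3,3,1] 1"
| "B (Suc (Suc n)) = B (Suc n) @ P (Suc n) @ B (Suc n)"

definition ones :: "nat list \<Rightarrow> nat" where
  "ones w = length (filter (\<lambda>x. x = 1) w)"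

lemma B1: "B 1 = [1,3,3,3,1,1,1,3,3,3,1]" by (simp add: numeral_eq_Suc)

end

theory Submission
  imports Defs
begin

lemma P2: "P 2 = [3,3,3]" by (simp add: numeral_eq_Suc)
lemma P3: "P 3 = [3,3,3,1,1,1,3,3,3]" by (simp add: numeral_eq_Suc)
lemma P4: "P 4 = [3,3,3,1,1,1,3,3,3,1,3,1,3,3,3,1,1,1,3,3,3]" by (simp add: numeral_eq_Suc)
lemma gen_append:
  "s \<le> 4 \<Longrightarrow> gen (u @ v) s = gen u s @ gen v (if even (length u) then s else 4 - s)"
  by (induction u arbitrary: s) auto
lemma gen_sym: "odd (length X) \<Longrightarrow> odd (length Y) \<Longrightarrow>
  gen (X @ [1] @ Y @ [1] @ X) 3 = gen X 3 @ [1] @ gen Y 3 @ [1] @ gen X 3"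
  by (simp add: gen_append)
lemma P_step: "n \<ge> 1 \<Longrightarrow> P (n+1) = gen (P n) 3"
  by (cases n) auto

lemma P_Q_aux:
  "n \<ge> 1 \<Longrightarrow> P (n+3) = P (n+2) @ [1] @ P n @ [1] @ P (n+2)
     \<and> odd (length (P n)) \<and> odd (length (P (n+1))) \<and> odd (length (P (n+2)))"
proof (induction n rule: dec_induct)
  case base
  have h: "(1::nat)+3 = 4" "(1::nat)+2 = 3" "(1::nat)+1 = 2" by simp_all
  have P1: "P 1 = [3]" by simp
  show ?case by (simp only: h P1 P2 P3 P4) simp
next
  case (step n)
  then have Q: "P (n+3) = P (n+2) @ [1] @ P n @ [1] @ P (n+2)"
    and o0: "odd (length (P n))" and o1: "odd (length (P (n+1)))"
    and o2: "odd (length (P (n+2)))" by auto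
  have o3: "odd (length (P (n+3)))" using Q o0 by simp
  have e4: "P (n+4) = gen (P (n+3)) 3"
    using P_step[of "n+3"] by (simp add: numeral_eq_Suc del: P.simps)
  have e3: "P (n+3) = gen (P (n+2)) 3"
    using P_step[of "n+2"] by (simp add: numeral_eq_Suc del: P.simps)
  have e1: "P (n+1) = gen (P n) 3"
    using P_step[of n] step(1) by simp
  have "P (n+4) = gen (P (n+2) @ [1] @ P n @ [1] @ P (n+2)) 3" by (simp only: e4 Q)
  also have "\<dots> = gen (P (n+2)) 3 @ [1] @ gen (P n) 3 @ [1] @ gen (P (n+2)) 3"
    by (rule gen_sym[OF o2 o0])
  also have "\<dots> = P (n+3) @ [1] @ P (n+1) @ [1] @ P (n+3)" by (simp only: e3 e1)
  finally have "P (n+4) = P (n+3) @ [1] @ P (n+1) @ [1] @ P (n+3)" .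
  moreover have a: "Suc n + 3 = n+4" "Suc n + 2 = n+3" "Suc n + 1 = n+2" by simp_all
  moreover have a4: "P (Suc n) = P (n+1)" by simp
  ultimately show ?case using o1 o2 o3 unfolding a a4 by simp
qed

lemma B_P: "n \<ge> 1 \<Longrightarrow> B n = 1 # P (n+2) @ [1]"
proof (induction n rule: dec_induct)
  case base
  show ?case by (simp add: numeral_eq_Suc)
next
  case (step n)
  have "B (Suc n) = B n @ P n @ B n" using step(1) by (cases n) auto
  also have "\<dots> = 1 # (P (n+2) @ [1] @ P n @ [1] @ P (n+2)) @ [1]" using step(3) by simp
  also have "\<dots> = 1 # P (n+3) @ [1]" using P_Q_aux[OF step(1)] by simp
  finally have "B (Suc n) = 1 # P (n+3) @ [1]" .
  moreover have "Suc n + 2 = n+3" by simp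
  ultimately show ?case by (simp only:)
qed

lemma B_len: "n \<ge> 1 \<Longrightarrow> length (B n) \<ge> n + 10"
proof (induction n rule: dec_induct)
  case base
  show ?case by (simp add: numeral_eq_Suc)
next
  case (step n)
  have "B (Suc n) = B n @ P n @ B n" using step(1) by (cases n) auto
  then show ?case using step(3) by simp
qed

theorem theorem5p3:
  fixes d :: real
  assumes "(\<lambda>n. real (ones (B n)) / real (length (B n))) \<longlonglongrightarrow> d"
    and "d \<noteq> 1/2"
  shows "(\<lambda>n. real (ones (P n)) / real (length (P n))) \<longlonglongrightarrow> d"
proof -
  define a where "a n = real (ones (B n)) / real (length (B n))" for n
  define b where "b n = real (ones (P (n+2))) / real (length (P (n+2)))" for n
  have bound: "\<bar>b n - a n\<bar> \<le> 4 / real n" if "n \<ge> 1" for n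
  proof -
    define c where "c = real (ones (B n))"
    define L where "L = real (length (B n))"
    have cL: "c \<le> L" unfolding c_def L_def ones_def by simp
    have c2: "c \<ge> 2" using B_P[OF that] unfolding c_def ones_def by simp
    have L: "L \<ge> real n + 10" using B_len[OF that] unfolding L_def by simp
    have bn: "b n = (c - 2) / (L - 2)" unfolding b_def c_def L_def
      using B_P[OF that] by (simp add: ones_def of_nat_diff)
    have an: "a n = c / L" unfolding a_def c_def L_def by simp
    have eq: "b n - a n = 2 * (c - L) / (L * (L - 2))"
      unfolding bn an using L by (simp add: field_simps)
    moreover have "2 * (c - L) / (L * (L - 2)) \<le> 0" using L cL
      by (intro divide_nonpos_pos) auto
    ultimately have nn: "b n - a n \<le> 0" by simp
    have "\<bar>b n - a n\<bar> = - (b n - a n)" using nn by simp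
    also have "\<dots> = - (2 * (c - L) / (L * (L - 2)))" by (simp only: eq)
    also have "\<dots> = 2 * (L - c) / (L * (L - 2))"
      by (simp add: minus_divide_left algebra_simps)
    also have "\<dots> \<le> 2 * L / (L * (L - 2))"
      using L cL c2 by (intro divide_right_mono) auto
    also have "\<dots> = 2 / (L - 2)" using L by simp
    also have "\<dots> \<le> 4 / real n" using L that by (simp add: field_simps)
    finally show ?thesis .
  qed
  have z: "(\<lambda>n. 4 / real n) \<longlonglongrightarrow> 0"
    by (rule lim_const_over_n)
  have "(\<lambda>n. b n - a n) \<longlonglongrightarrow> 0"
  proof (rule tendsto_0_le[OF z, where K=1])
    show "\<forall>\<^sub>F n in sequentially. norm (b n - a n) \<le> norm (4 / real n) * 1"
      using bound by (auto simp: eventually_sequentially intro!: exI[of _ 1])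
  qed
  then have "(\<lambda>n. (b n - a n) + a n) \<longlonglongrightarrow> 0 + d"
    using assms(1) unfolding a_def[abs_def] by (intro tendsto_add) auto
  then have "b \<longlonglongrightarrow> d" by simp
  then show ?thesis unfolding b_def by (rule LIMSEQ_offset)
qed

end
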